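(* Let $\alpha$ be a unit-speed curve in $\mathbb{R}^3$ with nonvanishing curvature, let $\alpha_T$ be its tangent indicatrix, and let $\beta$ be an evolute-direction curve of $\alpha_T$ (an $X$-direction curve of $\alpha_T$ with $N_\beta=T_T$). Then: (i) $\alpha_T$ is a circle or a part of a circle on the unit sphere if and only if $\beta$ is a helix; (ii) $\alpha_T$ is a spherical helix if and only if $\beta$ is a slant helix.
   Context: Let $\alpha:I\subset\mathbb{R}\to\mathbb{R}^3$ be a unit-speed curve with curvature $\kappa>0$, torsion $\tau$ and Frenet frame $\{T,N,B\}$. The tangent indicatrix of $\alpha$ is the curve $\alpha_T=T$ on the unit sphere. Its arc length is $s_T=\int\kappa\,ds$. Its Frenet apparatus is $\{T_T,N_T,B_T,\kappa_T,\tau_T\}$, with $\frac{dT_T}{ds_T}=\kappa_TN_T$, $\frac{dN_T}{ds_T}=-\kappa_TT_T+\tau_TB_T$ and $\frac{dB_T}{ds_T}=-\tau_TN_T$. Let $x,y,z$ be real functions of $s_T$ with $x^2+y^2+z^2=1$, and set $X=xT_T+yN_T+zB_T$. An integral curve $\beta$ of $X$, meaning $d\beta/ds_T=X$, is an $X$-direction curve of $\alpha_T$. It is regarded as a unit-speed Frenet curve with frame $\{T_\beta=X,N_\beta,B_\beta\}$, curvature $\kappa_\beta>0$ and torsion $\tau_\beta$. $\beta$ is an evolute-direction curve of $\alpha_T$ if $N_\beta=T_T$. A curve with curvature $k>0$ and torsion $t$ is a (general) helix if its unit tangent makes a constant angle with a fixed line; equivalently, $t/k$ is constant. It is a slant helix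 if its principal normal makes a constant angle with a fixed line; equivalently, $\frac{k^2}{(k^2+t^2)^{3/2}}\,(t/k)'$ is constant, where $'$ is the derivative with respect to arc length. A spherical helix is a helix lying on a sphere. *)

theory Defs
  imports "HOL-Analysis.Analysis"
begin

definition frenet_curve ::
  "real set \<Rightarrow> (real \<Rightarrow> real^3) \<Rightarrow> (real \<Rightarrow> real^3) \<Rightarrow> (real \<Rightarrow> real^3) \<Rightarrow>
   (real \<Rightarrow> real^3) \<Rightarrow> (real \<Rightarrow> real) \<Rightarrow> (real \<Rightarrow> real) \<Rightarrow> bool" where
  "frenet_curve J c T N B k t \<longleftrightarrow>
     (\<forall>s\<in>J.
        (c has_vector_derivative T s) (at s) \<and>
        (T has_vector_derivative (k s *\<^sub>R N s)) (at s) \<and>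
        (N has_vector_derivative (- (k s *\<^sub>R T s) + t s *\<^sub>R B s)) (at s) \<and>
        (B has_vector_derivative (- (t s *\<^sub>R N s))) (at s) \<and>
        norm (T s) = 1 \<and> norm (N s) = 1 \<and> T s \<bullet> N s = 0 \<and>
        B s = cross3 (T s) (N s) \<and>
        k s > 0)"

definition helix :: "real set \<Rightarrow> (real \<Rightarrow> real^3) \<Rightarrow> bool" where
  "helix J T \<longleftrightarrow> (\<exists>u::real^3. norm u = 1 \<and> (\<exists>a. \<forall>s\<in>J. T s \<bullet> u = a))"

definition slant_helix :: "real set \<Rightarrow> (real \<Rightarrow> real^3) \<Rightarrow> bool" where
  "slant_helix J N \<longleftrightarrow> (\<exists>u::real^3. norm u = 1 \<and> (\<exists>a. \<forall>s\<in>J. N s \<bullet> u = a))"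

definition on_sphere :: "real set \<Rightarrow> (real \<Rightarrow> real^3) \<Rightarrow> bool" where
  "on_sphere J c \<longleftrightarrow> (\<exists>m r. r > 0 \<and> (\<forall>s\<in>J. dist (c s) m = r))"

definition spherical_helix :: "real set \<Rightarrow> (real \<Rightarrow> real^3) \<Rightarrow> (real \<Rightarrow> real^3) \<Rightarrow> bool" where
  "spherical_helix J c T \<longleftrightarrow> helix J T \<and> on_sphere J c"

definition on_circle :: "real set \<Rightarrow> (real \<Rightarrow> real^3) \<Rightarrow> bool" where
  "on_circle J c \<longleftrightarrow> (\<exists>m u r. u \<noteq> 0 \<and> r > 0 \<and>
      (\<forall>s\<in>J. (c s - m) \<bullet> u = 0 \<and> dist (c s) m = r))"

end

theory Submission
  imports Defs
begin

lemma inner_vderiv: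
  fixes f :: "real \<Rightarrow> real^3"
  assumes "(f has_vector_derivative f') (at s)"
  shows "((\<lambda>s. f s \<bullet> u) has_real_derivative (f' \<bullet> u)) (at s)"
proof -
  have "((\<lambda>s. f s \<bullet> u) has_derivative (\<lambda>h. (h *\<^sub>R f') \<bullet> u)) (at s)"
    using assms unfolding has_vector_derivative_def
    by (intro has_derivative_inner_left) auto
  then show ?thesis
    unfolding has_field_derivative_def
    by (rule has_derivative_eq_rhs) (auto simp: fun_eq_iff)
qed

lemma zero_deriv_const:
  fixes f :: "real \<Rightarrow> real"
  assumes "convex S" "\<And>s. s \<in> S \<Longrightarrow> (f has_real_derivative 0) (at s)"
  shows "\<exists>c. \<forall>s\<in>S. f s = c"
  using assms by (intro has_field_derivative_zero_constant) (auto intro: has_field_derivative_at_within)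

lemma deriv_of_const:
  fixes f :: "real \<Rightarrow> real"
  assumes "open S" "s \<in> S" "(f has_real_derivative D) (at s)" "\<And>y. y \<in> S \<Longrightarrow> f y = c"
  shows "D = 0"
proof -
  have "(f has_vector_derivative D) (at s)"
    using assms(3) by (simp add: has_real_derivative_iff_has_vector_derivative)
  then have "((\<lambda>_. c) has_vector_derivative D) (at s)"
    by (rule has_vector_derivative_transform_within_open[OF _ assms(1,2)]) (use assms(4) in auto)
  moreover have "((\<lambda>_. c) has_vector_derivative 0) (at s)" by simp
  ultimately show ?thesis using vector_derivative_unique_at[of "\<lambda>_. c" D s 0] by blast
qed

theorem theorem4p5:
  fixes I :: "real set"
    and \<alpha> T N B :: "real \<Rightarrow> real^3" and \<kappa> \<tau> :: "real \<Rightarrow> real"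
    and \<sigma> :: "real \<Rightarrow> real"
    and \<alpha>T TT NT BT :: "real \<Rightarrow> real^3" and \<kappa>T \<tau>T :: "real \<Rightarrow> real"
    and x y z :: "real \<Rightarrow> real"
    and \<beta> N\<beta> B\<beta> :: "real \<Rightarrow> real^3" and \<kappa>\<beta> \<tau>\<beta> :: "real \<Rightarrow> real"
  assumes I: "open I" "is_interval I" "I \<noteq> {}"
    and \<alpha>: "frenet_curve I \<alpha> T N B \<kappa> \<tau>"
    and arclen: "\<forall>s\<in>I. (\<sigma> has_real_derivative \<kappa> s) (at s)"
    and indicatrix: "\<forall>s\<in>I. \<alpha>T (\<sigma> s) = T s"
    and \<alpha>T: "frenet_curve (\<sigma> ` I) \<alpha>T TT NT BT \<kappa>T \<tau>T"
    and xyz: "\<forall>t\<in>\<sigma> ` I. (x t)\<^sup>2 + (y t)\<^sup>2 + (z t)\<^sup>2 = 1"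
    and \<beta>: "frenet_curve (\<sigma> ` I) \<beta> (\<lambda>t. x t *\<^sub>R TT t + y t *\<^sub>R NT t + z t *\<^sub>R BT t)
              N\<beta> B\<beta> \<kappa>\<beta> \<tau>\<beta>"
    and evolute: "\<forall>t\<in>\<sigma> ` I. N\<beta> t = TT t"
  shows "(on_circle (\<sigma> ` I) \<alpha>T \<longleftrightarrow>
            helix (\<sigma> ` I) (\<lambda>t. x t *\<^sub>R TT t + y t *\<^sub>R NT t + z t *\<^sub>R BT t))
       \<and> (spherical_helix (\<sigma> ` I) \<alpha>T TT \<longleftrightarrow> slant_helix (\<sigma> ` I) N\<beta>)"
proof -
  define X where "X = (\<lambda>t. x t *\<^sub>R TT t + y t *\<^sub>R NT t + z t *\<^sub>R BT t)"
  define J where "J = \<sigma> ` I"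
  have cvx: "convex I" using I(2) by (rule is_interval_convex)
  have dT: "\<And>s. s \<in> I \<Longrightarrow> (T has_vector_derivative (\<kappa> s *\<^sub>R N s)) (at s)"
    and nT: "\<And>s. s \<in> I \<Longrightarrow> norm (T s) = 1"
    and nN: "\<And>s. s \<in> I \<Longrightarrow> norm (N s) = 1"
    and kpos: "\<And>s. s \<in> I \<Longrightarrow> \<kappa> s > 0"
    using \<alpha> unfolding frenet_curve_def by auto
  have dsig: "\<And>s. s \<in> I \<Longrightarrow> (\<sigma> has_vector_derivative \<kappa> s) (at s)"
    using arclen by (simp add: has_real_derivative_iff_has_vector_derivative)
  have daT: "\<And>t. t \<in> J \<Longrightarrow> (\<alpha>T has_vector_derivative TT t) (at t)"
    using \<alpha>T unfolding frenet_curve_def J_def by auto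
  have dX: "\<And>t. t \<in> J \<Longrightarrow> (X has_vector_derivative (\<kappa>\<beta> t *\<^sub>R N\<beta> t)) (at t)"
    and kbpos: "\<And>t. t \<in> J \<Longrightarrow> \<kappa>\<beta> t > 0"
    using \<beta> unfolding frenet_curve_def J_def X_def by auto
  have TTN: "TT (\<sigma> s) = N s" if s: "s \<in> I" for s
  proof -
    have "((\<alpha>T \<circ> \<sigma>) has_vector_derivative (\<kappa> s *\<^sub>R TT (\<sigma> s))) (at s)"
      using vector_diff_chain_at[OF dsig[OF s] daT] s J_def by auto
    then have "(T has_vector_derivative (\<kappa> s *\<^sub>R TT (\<sigma> s))) (at s)"
      by (rule has_vector_derivative_transform_within_open[OF _ I(1) s]) (use indicatrix in auto)
    then have "\<kappa> s *\<^sub>R TT (\<sigma> s) = \<kappa> s *\<^sub>R N s"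
      using vector_derivative_unique_at dT[OF s] by blast
    then show ?thesis using kpos[OF s] by simp
  qed
  have dXu: "((\<lambda>s. X (\<sigma> s) \<bullet> u) has_real_derivative ((\<kappa> s * \<kappa>\<beta> (\<sigma> s)) * (N s \<bullet> u))) (at s)"
    if s: "s \<in> I" for s u
  proof -
    have "((X \<circ> \<sigma>) has_vector_derivative (\<kappa> s *\<^sub>R (\<kappa>\<beta> (\<sigma> s) *\<^sub>R N\<beta> (\<sigma> s)))) (at s)"
      using vector_diff_chain_at[OF dsig[OF s] dX] s J_def by auto
    then have "((\<lambda>s. (X \<circ> \<sigma>) s \<bullet> u) has_real_derivative ((\<kappa> s *\<^sub>R (\<kappa>\<beta> (\<sigma> s) *\<^sub>R N\<beta> (\<sigma> s))) \<bullet> u)) (at s)"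
      by (rule inner_vderiv)
    moreover have "N\<beta> (\<sigma> s) = N s" using evolute TTN[OF s] s by auto
    ultimately show ?thesis by (simp add: o_def)
  qed
  have dTu: "((\<lambda>s. T s \<bullet> u) has_real_derivative (\<kappa> s * (N s \<bullet> u))) (at s)"
    if s: "s \<in> I" for s u
    using inner_vderiv[OF dT[OF s], of u] by simp
  have part1: "on_circle J \<alpha>T \<longleftrightarrow> helix J X"
  proof
    assume "on_circle J \<alpha>T"
    then obtain m u where u: "u \<noteq> 0" and h: "\<forall>t\<in>J. (\<alpha>T t - m) \<bullet> u = 0"
      unfolding on_circle_def by auto
    have Nu: "N s \<bullet> u = 0" if s: "s \<in> I" for s
    proof -
      have "\<kappa> s * (N s \<bullet> u) = 0"
        apply (rule deriv_of_const[OF I(1) s dTu[OF s], where c = "m \<bullet> u"])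
        using h indicatrix J_def by (auto simp: inner_diff_left)
      then show ?thesis using kpos[OF s] by simp
    qed
    have "\<exists>c. \<forall>s\<in>I. X (\<sigma> s) \<bullet> u = c"
    proof (rule zero_deriv_const[OF cvx])
      fix s assume s: "s \<in> I"
      show "((\<lambda>s. X (\<sigma> s) \<bullet> u) has_real_derivative 0) (at s)"
        using dXu[OF s, of u] Nu[OF s] by simp
    qed
    then obtain c where c: "\<forall>s\<in>I. X (\<sigma> s) \<bullet> u = c" by blast
    show "helix J X"
      unfolding helix_def
    proof (intro exI conjI)
      show "norm (u /\<^sub>R norm u) = 1" using u by simp
      show "\<forall>t\<in>J. X t \<bullet> (u /\<^sub>R norm u) = c / norm u"
        using c J_def by (auto simp: divide_inverse mult.commute)
    qed
  next
    assume "helix J X"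
    then obtain u a where u: "norm u = 1" and h: "\<forall>t\<in>J. X t \<bullet> u = a"
      unfolding helix_def by auto
    have Nu: "N s \<bullet> u = 0" if s: "s \<in> I" for s
    proof -
      have "(\<kappa> s * \<kappa>\<beta> (\<sigma> s)) * (N s \<bullet> u) = 0"
        apply (rule deriv_of_const[OF I(1) s dXu[OF s], where c = a])
        using h J_def by auto
      moreover have "\<kappa>\<beta> (\<sigma> s) > 0" using kbpos s J_def by auto
      ultimately show ?thesis using kpos[OF s] by simp
    qed
    have "\<exists>c. \<forall>s\<in>I. T s \<bullet> u = c"
    proof (rule zero_deriv_const[OF cvx])
      fix s assume s: "s \<in> I"
      show "((\<lambda>s. T s \<bullet> u) has_real_derivative 0) (at s)"
        using dTu[OF s, of u] Nu[OF s] by simp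
    qed
    then obtain c where c: "\<forall>s\<in>I. T s \<bullet> u = c" by blast
    have nrm: "(norm (T s - c *\<^sub>R u))\<^sup>2 = 1 - c\<^sup>2" if s: "s \<in> I" for s
    proof -
      have "(norm (T s - c *\<^sub>R u))\<^sup>2 = T s \<bullet> T s - 2 * c * (T s \<bullet> u) + c\<^sup>2 * (u \<bullet> u)"
        unfolding power2_norm_eq_inner
        by (simp add: inner_diff_left inner_diff_right algebra_simps power2_eq_square inner_commute)
      also have "\<dots> = 1 - c\<^sup>2"
        using nT[OF s] u c s by (simp add: power2_norm_eq_inner[symmetric] power2_eq_square)
      finally show ?thesis .
    qed
    obtain s0 where s0: "s0 \<in> I" using I(3) by auto
    have clt: "c\<^sup>2 < 1"
    proof (rule ccontr)
      assume "\<not> c\<^sup>2 < 1"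
      then have eq: "\<And>s. s \<in> I \<Longrightarrow> T s = c *\<^sub>R u"
      proof -
        fix s assume s: "s \<in> I"
        have "(norm (T s - c *\<^sub>R u))\<^sup>2 \<le> 0" using nrm[OF s] \<open>\<not> c\<^sup>2 < 1\<close> by linarith
        then have "norm (T s - c *\<^sub>R u) = 0" by simp
        then show "T s = c *\<^sub>R u" by simp
      qed
      have "\<kappa> s0 * (N s0 \<bullet> N s0) = 0"
        by (rule deriv_of_const[OF I(1) s0 dTu[OF s0], where c = "(c *\<^sub>R u) \<bullet> N s0"]) (use eq in auto)
      moreover have "N s0 \<bullet> N s0 = 1" using nN[OF s0] by (simp add: power2_norm_eq_inner[symmetric])
      ultimately show False using kpos[OF s0] by simp
    qed
    show "on_circle J \<alpha>T"
      unfolding on_circle_def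
    proof (intro exI conjI ballI)
      show "u \<noteq> 0" using u by auto
      show "0 < sqrt (1 - c\<^sup>2)" using clt by simp
    next
      fix t assume "t \<in> J"
      then obtain s where s: "s \<in> I" and t: "t = \<sigma> s" using J_def by auto
      then have aT: "\<alpha>T t = T s" using indicatrix by auto
      show "(\<alpha>T t - c *\<^sub>R u) \<bullet> u = 0"
        using aT c s u by (simp add: inner_diff_left power2_norm_eq_inner[symmetric])
      show "dist (\<alpha>T t) (c *\<^sub>R u) = sqrt (1 - c\<^sup>2)"
        using aT nrm[OF s] by (simp add: dist_norm real_sqrt_unique)
    qed
  qed
  have sph: "on_sphere J \<alpha>T"
    unfolding on_sphere_def
  proof (intro exI conjI ballI)
    show "(0::real) < 1" by simp
    fix t assume "t \<in> J"
    then show "dist (\<alpha>T t) 0 = 1" using J_def indicatrix nT by auto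
  qed
  have part2: "spherical_helix J \<alpha>T TT \<longleftrightarrow> slant_helix J N\<beta>"
  proof -
    have eqs: "(\<forall>t\<in>J. N\<beta> t \<bullet> u = a) \<longleftrightarrow> (\<forall>t\<in>J. TT t \<bullet> u = a)" for u a
      using evolute J_def by auto
    show ?thesis
      unfolding spherical_helix_def helix_def slant_helix_def eqs using sph by simp
  qed
  show ?thesis using part1 part2 unfolding X_def J_def by simp
qed

end
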